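(* Let $r\ge 6$ and $n\ge 1$ be integers, and let $P$ be a doubly-stochastic $n\times n$ matrix with $P(i,j)\le \frac1r$ for all $i,j$. Then $\mathrm{per}(P)\le(\sqrt2)^n F(P)$.
   Context: A doubly-stochastic matrix is an entrywise non-negative square matrix all of whose row and column sums equal $1$. $\mathrm{per}$ is the permanent. $F(P)=\prod_{1\le i,j\le n}(1-P(i,j))^{1-P(i,j)}$, with $0^0=1$. *)

theory Defs
  imports "HOL-Analysis.Analysis"
begin

definition per :: "real ^ 'n ^ 'n \<Rightarrow> real" where
  "per A = (\<Sum>p\<in>{p. p permutes (UNIV :: 'n set)}. \<Prod>i\<in>UNIV. A $ i $ p i)"

definition doubly_stochastic :: "real ^ 'n ^ 'n \<Rightarrow> bool" where
  "doubly_stochastic P \<longleftrightarrow>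
     (\<forall>i j. 0 \<le> P $ i $ j) \<and>
     (\<forall>i. (\<Sum>j\<in>UNIV. P $ i $ j) = 1) \<and>
     (\<forall>j. (\<Sum>i\<in>UNIV. P $ i $ j) = 1)"

definition self_pow :: "real \<Rightarrow> real" where
  "self_pow x = (if x = 0 then 1 else x powr x)"

definition F :: "real ^ 'n ^ 'n \<Rightarrow> real" where
  "F P = (\<Prod>i\<in>UNIV. \<Prod>j\<in>UNIV. self_pow (1 - P $ i $ j))"

end

theory Submission
  imports Defs "HOL-Analysis.Harmonic_Numbers"
begin


lemma ln_ge_one_minus_inv: "0 < x \<Longrightarrow> 1 - 1/x \<le> ln (x::real)"
proof -
  assume x: "0 < x"
  have "ln (1/x) \<le> 1/x - 1" using x by (intro ln_le_minus_one) simp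
  thus ?thesis using x by (simp add: ln_div)
qed

lemma TR:
  fixes x y :: real
  assumes x: "0 < x" and xy: "x \<le> y"
  shows "(y - x) * (ln x + ln y) / 2 \<le> (y * ln y - y) - (x * ln x - x)"
proof -
  define \<phi> where "\<phi> t = (t * ln t - t) - (x * ln x - x) - (t - x) * (ln x + ln t) / 2" for t
  have "\<phi> x \<le> \<phi> y"
  proof (rule DERIV_nonneg_imp_nondecreasing[OF xy])
    fix t assume t1: "x \<le> t" and t2: "t \<le> y"
    hence tp: "0 < t" using x by linarith
    have "(\<phi> has_real_derivative (((ln t - ln x) - (1 - x/t)) / 2)) (at t)"
      unfolding \<phi>_def using tp
      by (auto intro!: derivative_eq_intros simp: field_simps)
    moreover have "1 - x/t \<le> ln t - ln x"
      using ln_ge_one_minus_inv[of "t/x"] x tp by (simp add: ln_div)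
    ultimately show "\<exists>d. DERIV \<phi> t :> d \<and> d \<ge> 0" by force
  qed
  thus ?thesis by (simp add: \<phi>_def)
qed

definition G :: "real \<Rightarrow> real" where "G t = t * ln t - t"

lemma psi_bound:
  fixes c :: real and n :: nat
  assumes n: "1 \<le> n" and c0: "0 < c" and c1: "c < 1"
  shows "(\<Sum>k<n. ln (c + real k * (1 - c) / real (n - 1))) \<le> real n * (G 1 - G c) / (1 - c)"
proof -
  have base: "(1 - c) * ln c / 2 \<le> G 1 - G c"
    using TR[of c 1] c0 c1 by (simp add: G_def)
  have lnc: "ln c \<le> 0" using c0 c1 by simp
  obtain m where nm: "n = Suc m" using n by (cases n) auto
  show ?thesis
  proof (cases "m = 0")
    case True
    have "(1 - c) * ln c \<le> 0" using lnc c1 by (simp add: mult_nonneg_nonpos)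
    hence "(1 - c) * ln c \<le> G 1 - G c" using base by linarith
    hence "ln c \<le> (G 1 - G c) / (1 - c)"
      using c1 by (simp add: field_simps)
    thus ?thesis using nm True by simp
  next
    case False
    define \<delta> where "\<delta> = (1 - c) / real m"
    define x where "x k = c + real k * \<delta>" for k
    have dpos: "0 < \<delta>" using False c1 by (simp add: \<delta>_def)
    have xpos: "0 < x k" for k using c0 dpos by (simp add: x_def add_pos_nonneg)
    have xS: "x (Suc k) = x k + \<delta>" for k by (simp add: x_def algebra_simps)
    have xm: "x m = 1" using False by (simp add: x_def \<delta>_def)
    have x0: "x 0 = c" by (simp add: x_def)
    have step: "\<delta> * (ln (x k) + ln (x (Suc k))) / 2 \<le> G (x (Suc k)) - G (x k)" for k
      using TR[of "x k" "x (Suc k)"] xpos[of k] dpos xS[of k] by (simp add: G_def)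
    have "(\<Sum>k<m. \<delta> * (ln (x k) + ln (x (Suc k))) / 2) \<le> (\<Sum>k<m. G (x (Suc k)) - G (x k))"
      by (intro sum_mono step)
    also have "\<dots> = G 1 - G c" using sum_lessThan_telescope[of "\<lambda>k. G (x k)" m] by (simp add: xm x0)
    finally have A: "(\<Sum>k<m. \<delta> * (ln (x k) + ln (x (Suc k))) / 2) \<le> G 1 - G c" .
    define S where "S = (\<Sum>k<Suc m. ln (x k))"
    have S1: "S = (\<Sum>k<m. ln (x k))" by (simp add: S_def xm)
    have S2: "S = ln c + (\<Sum>k<m. ln (x (Suc k)))" unfolding S_def by (subst sum.lessThan_Suc_shift) (simp add: x0)
    have "(\<Sum>k<m. \<delta> * (ln (x k) + ln (x (Suc k))) / 2) = \<delta> / 2 * ((\<Sum>k<m. ln (x k)) + (\<Sum>k<m. ln (x (Suc k))))"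
      unfolding sum.distrib[symmetric] sum_distrib_left by (rule sum.cong) (auto simp: field_simps)
    also have "\<dots> = \<delta> / 2 * (2 * S - ln c)" using S1 S2 by simp
    finally have B: "\<delta> / 2 * (2 * S - ln c) \<le> G 1 - G c" using A by simp
    have "\<delta> * real m = 1 - c" using False by (simp add: \<delta>_def)
    have h1: "real m * (\<delta> / 2 * (2 * S - ln c)) \<le> real m * (G 1 - G c)"
      by (rule mult_left_mono[OF B]) simp
    have h2: "(1 - c) * (2 * S - ln c) / 2 = real m * (\<delta> / 2 * (2 * S - ln c))"
    proof -
      have "real m * (\<delta> / 2 * (2 * S - ln c)) = (\<delta> * real m) * (2 * S - ln c) / 2"
        by (simp only: mult_ac times_divide_eq_right times_divide_eq_left)
      thus ?thesis using \<open>\<delta> * real m = 1 - c\<close> by (simp add: mult.commute)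
    qed
    have "(1 - c) * (2 * S - ln c) / 2 \<le> real m * (G 1 - G c)"
      by (subst h2) (rule h1)
    hence "(1 - c) * S \<le> real (Suc m) * (G 1 - G c)" using base
      by (simp add: distrib_right right_diff_distrib)
    hence "S \<le> real (Suc m) * (G 1 - G c) / (1 - c)" using c1 by (simp add: pos_le_divide_eq mult.commute)
    moreover have "(\<Sum>k<n. ln (c + real k * (1 - c) / real (n - 1))) = S"
      unfolding S_def nm x_def \<delta>_def by simp
    ultimately show ?thesis using nm by simp
  qed
qed

lemma ln2_lb: "0.693 \<le> ln (2::real)"
  using ln_approx_bounds(1)[of 2 3] by (simp add: eval_nat_numeral)

lemma ln3_ub: "ln (3::real) \<le> 1.0987"
  using ln_approx_bounds(1)[of 3 5] by (simp add: eval_nat_numeral)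

lemma poly_ineq:
  fixes c L2 L3 :: real
  assumes c0: "0 < c" and c1: "c \<le> 1/6" and l2: "0.693 \<le> L2" and l3: "L3 \<le> 1.0987"
  shows "c * (L2 + L3 - 1) + 1/6 \<le> (1 - c) * (c^2 + L2) / 2"
proof -
  have a: "c * L3 \<le> c * (10987/10000)" using l3 c0 by (intro mult_left_mono) auto
  have b0: "L2 * (3*c - 1) \<le> (693/1000) * (3*c - 1)" using l2 c1 by (intro mult_right_mono_neg) auto
  hence b: "3 * (c * L2) - L2 \<le> (693/1000) * (3*c - 1)" by (simp add: algebra_simps)
  have key: "c * (L2 + L3 - 1) + 1/6 - (1 - c) * (c^2 + L2) / 2
     = (3 * (c * L2) - L2) / 2 + c * L3 - c + 1/6 - (c^2 - c^3) / 2"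
    by (simp add: field_simps power2_eq_square power3_eq_cube)
  show ?thesis
  proof (cases "c \<le> 157/1000")
    case True
    have "c^3 \<le> c^2" using c0 c1 by (simp add: power_decreasing_iff) 
    hence "(3 * (c * L2) - L2) / 2 + c * L3 - c + 1/6 - (c^2 - c^3) / 2 \<le> 0" using a b True by argo
    thus ?thesis using key by linarith
  next
    case False
    have "(157/1000) * (157/1000) \<le> c * c" using False by (intro mult_mono) auto
    hence "(5/6) * ((157/1000) * (157/1000)) \<le> (1 - c) * (c * c)" using c1 c0 False
      by (intro mult_mono) auto
    hence "(5/6) * ((157/1000) * (157/1000)) \<le> c^2 - c^3" by (simp add: power2_eq_square power3_eq_cube algebra_simps)
    hence "(3 * (c * L2) - L2) / 2 + c * L3 - c + 1/6 - (c^2 - c^3) / 2 \<le> 0" using a b c1 by argo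
    thus ?thesis using key by linarith
  qed
qed

lemma B_bound:
  fixes c :: real
  assumes c0: "0 < c" and c1: "c \<le> 1/6"
  shows "(G 1 - G c) / (1 - c) \<le> -1 + c^2/2 + ln 2 / 2"
proof -
  have "ln (1/(6*c)) \<le> 1/(6*c) - 1" using c0 by (intro ln_le_minus_one) simp
  moreover have "ln (1/(6*c)) = - ln 2 - ln 3 - ln c" using c0 ln_mult[of 2 3]
    by (simp add: ln_div ln_mult)
  ultimately have "- ln c \<le> ln 2 + ln 3 + 1/(6*c) - 1" by linarith
  hence "c * (- ln c) \<le> c * (ln 2 + ln 3 + 1/(6*c) - 1)" using c0 by (intro mult_left_mono) auto
  also have "\<dots> = c * (ln 2 + ln 3 - 1) + 1/6" using c0 by (simp add: field_simps)
  also have "\<dots> \<le> (1 - c) * (c^2 + ln 2) / 2" by (rule poly_ineq[OF c0 c1 ln2_lb ln3_ub])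
  finally have h: "- (c * ln c) \<le> (1 - c) * (c^2 + ln 2) / 2" by simp
  have "G 1 - G c = (1 - c) * (-1) + (- (c * ln c))" by (simp add: G_def algebra_simps)
  also have "\<dots> \<le> (1 - c) * (-1) + (1 - c) * (c^2 + ln 2) / 2" using h by linarith
  also have "\<dots> = (1 - c) * (-1 + c^2/2 + ln 2 / 2)" by (simp add: field_simps)
  finally show ?thesis using c1 by (simp add: pos_divide_le_eq mult.commute)
qed



lemma ln_ge_half: assumes y0: "0 < y" and y1: "y \<le> 1" shows "(y - 1/y) / 2 \<le> ln (y::real)"
proof -
  define \<phi> where "\<phi> t = ln t - (t - 1/t) / 2" for t :: real
  have "\<phi> 1 \<le> \<phi> y"
  proof (rule DERIV_nonpos_imp_nonincreasing[OF y1])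
    fix t assume t1: "y \<le> t" and t2: "t \<le> 1"
    hence tp: "0 < t" using y0 by linarith
    have "(\<phi> has_real_derivative (- ((t - 1)^2 / (2 * t^2)))) (at t)"
      unfolding \<phi>_def using tp
      by (auto intro!: derivative_eq_intros simp: field_simps power2_eq_square)
    moreover have "- ((t - 1)^2 / (2 * t^2)) \<le> 0" by simp
    ultimately show "\<exists>d. DERIV \<phi> t :> d \<and> d \<le> 0" by blast
  qed
  thus ?thesis by (simp add: \<phi>_def)
qed

lemma g_bound: assumes p0: "0 \<le> p" and p1: "p < 1"
  shows "- p + p^2/2 \<le> (1 - p) * ln (1 - (p::real))"
proof -
  have y: "0 < 1 - p" using p1 by simp
  have "(1 - p) * (((1 - p) - 1/(1 - p)) / 2) \<le> (1 - p) * ln (1 - p)"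
    using ln_ge_half[OF y] p0 y by (intro mult_left_mono) auto
  moreover have "(1 - p) * (((1 - p) - 1/(1 - p)) / 2) = - p + p^2/2"
    using y by (simp add: field_simps power2_eq_square)
  ultimately show ?thesis by simp
qed

lemma ln_self_pow: assumes "0 < x" shows "ln (self_pow x) = x * ln x" "0 < self_pow x"
  using assms by (auto simp: self_pow_def ln_powr)

lemma concave_sum:
  fixes x :: "'a \<Rightarrow> real"
  assumes K: "finite K" "K \<noteq> {}" and c: "0 < c" and t: "0 \<le> t" and x: "\<And>i. i \<in> K \<Longrightarrow> 0 \<le> x i"
  shows "(\<Sum>i\<in>K. ln (c + t * x i)) \<le> real (card K) * ln (c + t * (\<Sum>i\<in>K. x i) / real (card K))"
proof -
  define y where "y = c + t * (\<Sum>i\<in>K. x i) / real (card K)"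
  have cK: "0 < real (card K)" using K by (simp add: card_gt_0_iff)
  have sx: "0 \<le> (\<Sum>i\<in>K. x i)" using x by (simp add: sum_nonneg)
  have y0: "0 < y" unfolding y_def using c t sx cK by (simp add: add_pos_nonneg)
  have each: "ln (c + t * x i) \<le> ln y + (c + t * x i) / y - 1" if i: "i \<in> K" for i
  proof -
    have u: "0 < c + t * x i" using c t x[OF i] by (simp add: add_pos_nonneg)
    have "ln ((c + t * x i) / y) \<le> (c + t * x i) / y - 1" using u y0 by (intro ln_le_minus_one) simp
    thus ?thesis using u y0 by (simp add: ln_div)
  qed
  have "(\<Sum>i\<in>K. ln (c + t * x i)) \<le> (\<Sum>i\<in>K. ln y + (c + t * x i) / y - 1)"
    by (rule sum_mono) (rule each)
  also have "\<dots> = real (card K) * ln y + (real (card K) * c + t * (\<Sum>i\<in>K. x i)) / y - real (card K)"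
    by (simp add: sum.distrib sum_subtractf sum_divide_distrib[symmetric] sum_distrib_left)
  also have "(real (card K) * c + t * (\<Sum>i\<in>K. x i)) = real (card K) * y"
    using cK by (simp add: y_def field_simps)
  also have "real (card K) * ln y + real (card K) * y / y - real (card K) = real (card K) * ln y"
    using y0 by simp
  finally show ?thesis by (simp add: y_def)
qed

definition Psi :: "nat \<Rightarrow> real \<Rightarrow> real \<Rightarrow> real" where
  "Psi n c D = (\<Sum>k<n. ln (c + real k * D / real (n - 1))) / real n"

lemma row_step:
  fixes b :: "'a \<Rightarrow> real"
  assumes K: "finite K" and c: "0 < c" and b: "\<And>i. i \<in> K \<Longrightarrow> 0 \<le> b i"
  shows "ln (c + (\<Sum>i\<in>K. b i)) + (\<Sum>i0\<in>K. Psi (card K) c ((\<Sum>i\<in>K. b i) - b i0))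
         \<le> real (Suc (card K)) * Psi (Suc (card K)) c (\<Sum>i\<in>K. b i)"
proof (cases "K = {}")
  case True
  thus ?thesis by (simp add: Psi_def)
next
  case False
  define m where "m = card K"
  define D where "D = (\<Sum>i\<in>K. b i)"
  have m0: "0 < m" using False K by (simp add: m_def card_gt_0_iff)
  have bD: "b i0 \<le> D" if "i0 \<in> K" for i0
    unfolding D_def using K b that by (intro member_le_sum) auto
  have sumx: "(\<Sum>i0\<in>K. D - b i0) = real m * D - D"
    by (simp add: sum_subtractf m_def D_def)
  have inner: "(\<Sum>i0\<in>K. ln (c + real k * (D - b i0) / real (m - 1))) \<le> real m * ln (c + real k * D / real m)"
    if k: "k < m" for k
  proof -
    have "(\<Sum>i0\<in>K. ln (c + (real k / real (m - 1)) * (D - b i0)))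
        \<le> real (card K) * ln (c + (real k / real (m - 1)) * (\<Sum>i0\<in>K. D - b i0) / real (card K))"
      using bD by (intro concave_sum[OF K False c]) auto
    also have "(real k / real (m - 1)) * (\<Sum>i0\<in>K. D - b i0) / real (card K) = real k * D / real m"
    proof (cases "m = 1")
      case True thus ?thesis using k by simp
    next
      case False
      hence "real (m - 1) = real m - 1" "real m - 1 \<noteq> 0" using m0 by auto
      thus ?thesis unfolding sumx m_def[symmetric] using m0 by (simp add: field_simps)
    qed
    finally show ?thesis by (simp add: m_def)
  qed
  have "(\<Sum>i0\<in>K. Psi m c (D - b i0)) = (\<Sum>k<m. \<Sum>i0\<in>K. ln (c + real k * (D - b i0) / real (m - 1))) / real m"
    unfolding Psi_def by (simp add: sum_divide_distrib[symmetric] sum.swap[of _ K])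
  also have "\<dots> \<le> (\<Sum>k<m. real m * ln (c + real k * D / real m)) / real m"
    using m0 by (intro divide_right_mono sum_mono inner) auto
  also have "\<dots> = (\<Sum>k<m. ln (c + real k * D / real m))"
    using m0 by (simp add: sum_distrib_left[symmetric])
  finally have A: "(\<Sum>i0\<in>K. Psi m c (D - b i0)) \<le> (\<Sum>k<m. ln (c + real k * D / real m))" .
  have "real (Suc m) * Psi (Suc m) c D = (\<Sum>k<Suc m. ln (c + real k * D / real m))"
    by (simp add: Psi_def)
  also have "\<dots> = (\<Sum>k<m. ln (c + real k * D / real m)) + ln (c + D)"
    using m0 by simp
  finally show ?thesis using A by (simp add: m_def[symmetric] D_def[symmetric])
qed

definition T :: "('a \<Rightarrow> 'b \<Rightarrow> real) \<Rightarrow> ('a \<Rightarrow> 'b) \<Rightarrow> 'a set \<Rightarrow> real" where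
  "T a \<sigma> I = (\<Sum>i\<in>I. Psi (card I) (a i (\<sigma> i)) (\<Sum>i'\<in>I - {i}. a i (\<sigma> i')))"

lemma T_cong: "(\<And>i. i \<in> I \<Longrightarrow> \<sigma> i = \<sigma>' i) \<Longrightarrow> T a \<sigma> I = T a \<sigma>' I"
  unfolding T_def by (intro sum.cong refl) auto

lemma sum_swap_diff:
  assumes "finite I"
  shows "(\<Sum>i0\<in>I. \<Sum>i\<in>I-{i0}. f i0 i) = (\<Sum>i\<in>I. \<Sum>i0\<in>I-{i}. (f i0 i :: real))"
proof -
  have l: "(\<Sum>i0\<in>I. \<Sum>i\<in>I-{i0}. f i0 i) = (\<Sum>x\<in>I. \<Sum>y\<in>{y\<in>I. x \<noteq> y}. f x y)"
    by (intro sum.cong refl) auto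
  have r: "(\<Sum>i\<in>I. \<Sum>i0\<in>I-{i}. f i0 i) = (\<Sum>y\<in>I. \<Sum>x\<in>{x\<in>I. x \<noteq> y}. f x y)"
    by (intro sum.cong refl) auto
  show ?thesis unfolding l r by (rule sum.swap_restrict[OF assms assms])
qed

lemma Tsuper:
  assumes I: "finite I" "I \<noteq> {}" and pos: "\<And>i. i \<in> I \<Longrightarrow> 0 < a i (\<sigma> i)"
    and nn: "\<And>i j. 0 \<le> a i j"
  shows "(\<Sum>i0\<in>I. ln (\<Sum>i'\<in>I. a i0 (\<sigma> i')) + T a \<sigma> (I - {i0})) \<le> real (card I) * T a \<sigma> I"
proof -
  define D where "D i = (\<Sum>i'\<in>I - {i}. a i (\<sigma> i'))" for i
  have n: "card I = Suc (card I - 1)" using I by (simp add: card_gt_0_iff)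
  have cI: "card (I - {i}) = card I - 1" if "i \<in> I" for i using I that by simp
  have one: "(\<Sum>i'\<in>I. a i0 (\<sigma> i')) = a i0 (\<sigma> i0) + D i0" if "i0 \<in> I" for i0
    unfolding D_def using I that by (simp add: sum.remove)
  have two: "T a \<sigma> (I - {i0}) = (\<Sum>i\<in>I-{i0}. Psi (card I - 1) (a i (\<sigma> i)) (D i - a i (\<sigma> i0)))"
    if i0: "i0 \<in> I" for i0
    unfolding T_def cI[OF i0]
  proof (intro sum.cong refl)
    fix i assume i: "i \<in> I - {i0}"
    have "I - {i0} - {i} = (I - {i}) - {i0}" by auto
    moreover have "(\<Sum>i'\<in>(I - {i}) - {i0}. a i (\<sigma> i')) = D i - a i (\<sigma> i0)"
      unfolding D_def using I i i0 by (subst sum_diff1) auto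
    ultimately show "Psi (card I - 1) (a i (\<sigma> i)) (\<Sum>i'\<in>I - {i0} - {i}. a i (\<sigma> i')) =
       Psi (card I - 1) (a i (\<sigma> i)) (D i - a i (\<sigma> i0))" by simp
  qed
  have "(\<Sum>i0\<in>I. ln (\<Sum>i'\<in>I. a i0 (\<sigma> i')) + T a \<sigma> (I - {i0}))
     = (\<Sum>i0\<in>I. ln (a i0 (\<sigma> i0) + D i0)) + (\<Sum>i0\<in>I. \<Sum>i\<in>I-{i0}. Psi (card I - 1) (a i (\<sigma> i)) (D i - a i (\<sigma> i0)))"
    unfolding sum.distrib[symmetric] by (rule sum.cong) (simp_all only: one two)
  also have "\<dots> = (\<Sum>i\<in>I. ln (a i (\<sigma> i) + D i) + (\<Sum>i0\<in>I-{i}. Psi (card I - 1) (a i (\<sigma> i)) (D i - a i (\<sigma> i0))))"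
    unfolding sum.distrib by (subst sum_swap_diff[OF I(1)]) (rule refl)
  also have "\<dots> \<le> (\<Sum>i\<in>I. real (card I) * Psi (card I) (a i (\<sigma> i)) (D i))"
  proof (rule sum_mono)
    fix i assume i: "i \<in> I"
    have "ln (a i (\<sigma> i) + D i) + (\<Sum>i0\<in>I-{i}. Psi (card (I - {i})) (a i (\<sigma> i)) (D i - a i (\<sigma> i0)))
        \<le> real (Suc (card (I - {i}))) * Psi (Suc (card (I - {i}))) (a i (\<sigma> i)) (D i)"
      unfolding D_def by (rule row_step) (use I pos[OF i] nn in auto)
    thus "ln (a i (\<sigma> i) + D i) + (\<Sum>i0\<in>I-{i}. Psi (card I - 1) (a i (\<sigma> i)) (D i - a i (\<sigma> i0)))
        \<le> real (card I) * Psi (card I) (a i (\<sigma> i)) (D i)"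
      unfolding cI[OF i] using n by simp
  qed
  also have "\<dots> = real (card I) * T a \<sigma> I"
    by (simp only: T_def D_def sum_distrib_left)
  finally show ?thesis .
qed



definition injs :: "'a set \<Rightarrow> 'b set \<Rightarrow> ('a \<Rightarrow> 'b) set" where
  "injs I J = {\<sigma>. \<sigma> \<in> I \<rightarrow>\<^sub>E J \<and> inj_on \<sigma> I}"

lemma finite_injs: "finite I \<Longrightarrow> finite J \<Longrightarrow> finite (injs I J)"
  unfolding injs_def by (rule finite_subset[OF _ finite_PiE[of I "\<lambda>_. J"]]) auto

lemma injs_empty: "injs {} J = {\<lambda>_. undefined}"
  unfolding injs_def by auto

lemma injs_image:
  assumes "finite I" "finite J" "card I = card J" "\<sigma> \<in> injs I J"
  shows "\<sigma> ` I = J"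
proof -
  have inj: "inj_on \<sigma> I" and sub: "\<sigma> ` I \<subseteq> J" using assms(4) by (auto simp: injs_def)
  have "card (\<sigma> ` I) = card J" using card_image[OF inj] assms(3) by simp
  thus ?thesis using card_subset_eq[OF assms(2) sub] by simp
qed

lemma injs_sum_row:
  assumes "finite I" "finite J" "card I = card J" "\<sigma> \<in> injs I J"
  shows "(\<Sum>i\<in>I. g (\<sigma> i)) = (\<Sum>j\<in>J. g j)"
proof -
  have inj: "inj_on \<sigma> I" using assms(4) by (auto simp: injs_def)
  show ?thesis using sum.reindex[OF inj, of g] injs_image[OF assms] by simp
qed

lemma injs_expand:
  fixes I :: "'a set" and J :: "'b set" and f :: "('a \<Rightarrow> 'b) \<Rightarrow> 'c::comm_monoid_add"
  assumes I: "finite I" and J: "finite J" and i0: "i0 \<in> I"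
  shows "(\<Sum>\<sigma>\<in>injs I J. f \<sigma>) = (\<Sum>j\<in>J. \<Sum>\<tau>\<in>injs (I - {i0}) (J - {j}). f (\<tau>(i0 := j)))"
proof -
  define h :: "'b \<times> ('a \<Rightarrow> 'b) \<Rightarrow> 'a \<Rightarrow> 'b" where "h = (\<lambda>(j, \<tau>). \<tau>(i0 := j))"
  define S where "S = (SIGMA j:J. injs (I - {i0}) (J - {j}))"
  have inj: "inj_on h S"
  proof (rule inj_onI)
    fix x y assume x: "x \<in> S" and y: "y \<in> S" and e: "h x = h y"
    obtain j \<tau> where xe: "x = (j, \<tau>)" by (cases x)
    obtain j' \<tau>' where ye: "y = (j', \<tau>')" by (cases y)
    have t: "\<tau> \<in> (I - {i0}) \<rightarrow>\<^sub>E (J - {j})" "\<tau>' \<in> (I - {i0}) \<rightarrow>\<^sub>E (J - {j'})"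
      using x y xe ye by (auto simp: S_def injs_def)
    have e': "\<tau>(i0 := j) = \<tau>'(i0 := j')" using e xe ye by (simp add: h_def)
    hence jj: "j = j'" by (metis fun_upd_same)
    have "\<tau> = \<tau>'"
    proof
      fix z show "\<tau> z = \<tau>' z"
      proof (cases "z = i0")
        case True thus ?thesis using t by (auto simp: PiE_def extensional_def)
      next
        case False thus ?thesis using e' by (metis fun_upd_other)
      qed
    qed
    thus "x = y" using xe ye jj by simp
  qed
  have img: "h ` S = injs I J"
  proof
    show "h ` S \<subseteq> injs I J"
    proof
      fix s assume "s \<in> h ` S"
      then obtain j \<tau> where s: "s = \<tau>(i0 := j)" and j: "j \<in> J"
        and t: "\<tau> \<in> (I - {i0}) \<rightarrow>\<^sub>E (J - {j})" and ti: "inj_on \<tau> (I - {i0})"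
        by (auto simp: h_def S_def injs_def)
      have "s \<in> I \<rightarrow>\<^sub>E J" using t j i0 unfolding s by (auto simp: PiE_def Pi_def extensional_def)
      moreover have "inj_on s I"
      proof -
        have "I = insert i0 (I - {i0})" using i0 by auto
        moreover have "inj_on s (I - {i0})" using ti unfolding s by (simp add: inj_on_def)
        moreover have "s i0 \<notin> s ` (I - {i0} - {i0})" using t unfolding s by (auto simp: PiE_def Pi_def)
        ultimately show ?thesis by (metis inj_on_insert)
      qed
      ultimately show "s \<in> injs I J" by (simp add: injs_def)
    qed
  next
    show "injs I J \<subseteq> h ` S"
    proof
      fix \<sigma> assume s: "\<sigma> \<in> injs I J"
      hence sP: "\<sigma> \<in> I \<rightarrow>\<^sub>E J" and si: "inj_on \<sigma> I" by (auto simp: injs_def)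
      define \<tau> where "\<tau> = \<sigma>(i0 := undefined)"
      have "\<tau> \<in> (I - {i0}) \<rightarrow>\<^sub>E (J - {\<sigma> i0})"
        using sP si i0 unfolding \<tau>_def by (auto simp: PiE_def Pi_def extensional_def inj_on_def)
      moreover have "inj_on \<tau> (I - {i0})" using si unfolding \<tau>_def by (auto simp: inj_on_def)
      moreover have "\<sigma> i0 \<in> J" using sP i0 by auto
      moreover have "\<sigma> = h (\<sigma> i0, \<tau>)" by (simp add: h_def \<tau>_def)
      ultimately show "\<sigma> \<in> h ` S" unfolding S_def injs_def by blast
    qed
  qed
  have fin: "\<And>j. finite (injs (I - {i0}) (J - {j}))" using I J by (simp add: finite_injs)
  have "(\<Sum>j\<in>J. \<Sum>\<tau>\<in>injs (I - {i0}) (J - {j}). f (\<tau>(i0 := j))) = (\<Sum>x\<in>S. f (h x))"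
    unfolding S_def h_def using J fin by (subst sum.Sigma) (auto intro!: sum.cong simp: case_prod_beta)
  also have "\<dots> = (\<Sum>\<sigma>\<in>injs I J. f \<sigma>)" using sum.reindex[OF inj, of f] img by simp
  finally show ?thesis by simp
qed

lemma logsum:
  fixes a p :: "'b \<Rightarrow> real"
  assumes J: "finite J" and a: "\<And>j. j \<in> J \<Longrightarrow> 0 \<le> a j" and p: "\<And>j. j \<in> J \<Longrightarrow> 0 \<le> p j"
  shows "(\<Sum>j\<in>J. a j * p j) * ln (\<Sum>j\<in>J. a j * p j)
     \<le> (\<Sum>j\<in>J. a j * p j) * ln (\<Sum>j\<in>J. a j) + (\<Sum>j\<in>J. a j * (p j * ln (p j)))"
proof -
  define P where "P = (\<Sum>j\<in>J. a j * p j)"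
  define R where "R = (\<Sum>j\<in>J. a j)"
  have P0: "0 \<le> P" unfolding P_def using a p by (simp add: sum_nonneg)
  show ?thesis
  proof (cases "P = 0")
    case True
    hence "\<forall>j\<in>J. a j * p j = 0" using J a p unfolding P_def by (subst (asm) sum_nonneg_eq_0_iff) auto
    hence "(\<Sum>j\<in>J. a j * (p j * ln (p j))) = 0" by (intro sum.neutral) auto
    thus ?thesis using True by (simp add: P_def[symmetric])
  next
    case False
    hence Pp: "0 < P" using P0 by simp
    have Rp: "0 < R"
    proof (rule ccontr)
      assume "\<not> 0 < R"
      moreover have "0 \<le> R" unfolding R_def using a by (simp add: sum_nonneg)
      ultimately have "R = 0" by simp
      hence "\<forall>j\<in>J. a j = 0" using J a unfolding R_def by (subst (asm) sum_nonneg_eq_0_iff) auto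
      hence "P = 0" unfolding P_def by simp
      thus False using False by simp
    qed
    define y where "y = P / R"
    have y0: "0 < y" using Pp Rp by (simp add: y_def)
    have each: "a j * (p j * ln y + p j - y) \<le> a j * (p j * ln (p j))" if j: "j \<in> J" for j
    proof (rule mult_left_mono[OF _ a[OF j]])
      show "p j * ln y + p j - y \<le> p j * ln (p j)"
      proof (cases "p j = 0")
        case True thus ?thesis using y0 by simp
      next
        case False
        hence pp: "0 < p j" using p[OF j] by simp
        have "ln (y / p j) \<le> y / p j - 1" using pp y0 by (intro ln_le_minus_one) simp
        hence "p j * ln (y / p j) \<le> p j * (y / p j - 1)" using pp by (intro mult_left_mono) auto
        moreover have "p j * ln (y / p j) = p j * ln y - p j * ln (p j)" using pp y0 by (simp add: ln_div right_diff_distrib)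
        moreover have "p j * (y / p j - 1) = y - p j" using pp by (simp add: field_simps)
        ultimately show ?thesis by linarith
      qed
    qed
    have "(\<Sum>j\<in>J. a j * (p j * ln y + p j - y)) = P * ln y + P - y * R"
      unfolding P_def R_def by (simp add: sum.distrib sum_subtractf sum_distrib_left sum_distrib_right algebra_simps)
    also have "\<dots> = P * ln P - P * ln R" using Pp Rp by (simp add: y_def ln_div algebra_simps)
    finally have "P * ln P - P * ln R \<le> (\<Sum>j\<in>J. a j * (p j * ln (p j)))"
      using sum_mono[of J "\<lambda>j. a j * (p j * ln y + p j - y)", OF each] by simp
    thus ?thesis unfolding P_def[symmetric] R_def[symmetric] by simp
  qed
qed

definition W :: "('a \<Rightarrow> 'b \<Rightarrow> real) \<Rightarrow> 'a set \<Rightarrow> ('a \<Rightarrow> 'b) \<Rightarrow> real" where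
  "W a I \<sigma> = (\<Prod>i\<in>I. a i (\<sigma> i))"

lemma W_nonneg: "(\<And>i j. 0 \<le> a i j) \<Longrightarrow> 0 \<le> W a I \<sigma>"
  unfolding W_def by (intro prod_nonneg) auto

lemma W_upd: assumes "finite I" "i0 \<in> I"
  shows "W a I (\<tau>(i0 := j)) = a i0 j * W a (I - {i0}) \<tau>"
proof -
  have "W a I (\<tau>(i0 := j)) = a i0 j * (\<Prod>i\<in>I - {i0}. a i ((\<tau>(i0 := j)) i))"
    unfolding W_def using assms by (subst prod.remove[of I i0]) auto
  also have "(\<Prod>i\<in>I - {i0}. a i ((\<tau>(i0 := j)) i)) = W a (I - {i0}) \<tau>"
    unfolding W_def by (intro prod.cong) auto
  finally show ?thesis .
qed

lemma W_pos: assumes "finite I" "\<And>i j. 0 \<le> a i j" "0 < W a I \<sigma>" "i \<in> I"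
  shows "0 < a i (\<sigma> i)"
proof -
  have "a i (\<sigma> i) \<noteq> 0"
  proof
    assume "a i (\<sigma> i) = 0"
    hence "W a I \<sigma> = 0" unfolding W_def using assms(1,4) by (intro prod_zero) auto
    thus False using assms(3) by simp
  qed
  thus ?thesis using assms(2)[of i "\<sigma> i"] by simp
qed

lemma key:
  fixes a :: "'a \<Rightarrow> 'b \<Rightarrow> real"
  assumes nn: "\<And>i j. 0 \<le> a i j"
  shows "finite I \<Longrightarrow> finite J \<Longrightarrow> card I = n \<Longrightarrow> card J = n \<Longrightarrow>
    (\<Sum>\<sigma>\<in>injs I J. W a I \<sigma>) * ln (\<Sum>\<sigma>\<in>injs I J. W a I \<sigma>) \<le> (\<Sum>\<sigma>\<in>injs I J. W a I \<sigma> * T a \<sigma> I)"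
proof (induction n arbitrary: I J)
  case 0
  hence "I = {}" "J = {}" by auto
  thus ?case by (simp add: injs_empty W_def T_def)
next
  case (Suc m)
  note fI = Suc.prems(1) and fJ = Suc.prems(2) and cI = Suc.prems(3) and cJ = Suc.prems(4)
  have Ine: "I \<noteq> {}" using cI by auto
  define P where "P = (\<Sum>\<sigma>\<in>injs I J. W a I \<sigma>)"
  have P0: "0 \<le> P" unfolding P_def using nn by (intro sum_nonneg W_nonneg) auto
  have step: "P * ln P \<le> (\<Sum>\<sigma>\<in>injs I J. W a I \<sigma> * (ln (\<Sum>i'\<in>I. a i0 (\<sigma> i')) + T a \<sigma> (I - {i0})))"
    if i0: "i0 \<in> I" for i0
  proof -
    define Pj where "Pj j = (\<Sum>\<tau>\<in>injs (I - {i0}) (J - {j}). W a (I - {i0}) \<tau>)" for j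
    define R where "R = (\<Sum>j\<in>J. a i0 j)"
    have Pj0: "0 \<le> Pj j" for j unfolding Pj_def using nn by (intro sum_nonneg W_nonneg) auto
    have PA: "P = (\<Sum>j\<in>J. a i0 j * Pj j)"
      unfolding P_def Pj_def injs_expand[OF fI fJ i0] W_upd[OF fI i0] by (simp add: sum_distrib_left)
    have TB: "(\<Sum>\<sigma>\<in>injs I J. W a I \<sigma> * T a \<sigma> (I - {i0}))
       = (\<Sum>j\<in>J. a i0 j * (\<Sum>\<tau>\<in>injs (I - {i0}) (J - {j}). W a (I - {i0}) \<tau> * T a \<tau> (I - {i0})))"
    proof -
      have "\<And>\<tau> j. T a (\<tau>(i0 := j)) (I - {i0}) = T a \<tau> (I - {i0})" by (rule T_cong) auto
      thus ?thesis unfolding injs_expand[OF fI fJ i0] W_upd[OF fI i0]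
        by (simp add: sum_distrib_left mult.assoc)
    qed
    have IH: "Pj j * ln (Pj j) \<le> (\<Sum>\<tau>\<in>injs (I - {i0}) (J - {j}). W a (I - {i0}) \<tau> * T a \<tau> (I - {i0}))"
      if j: "j \<in> J" for j
      unfolding Pj_def using fI fJ cI cJ i0 j by (intro Suc.IH) auto
    have "P * ln P \<le> P * ln R + (\<Sum>j\<in>J. a i0 j * (Pj j * ln (Pj j)))"
      unfolding PA R_def by (rule logsum[OF fJ]) (use nn Pj0 in auto)
    also have "\<dots> \<le> P * ln R + (\<Sum>\<sigma>\<in>injs I J. W a I \<sigma> * T a \<sigma> (I - {i0}))"
      unfolding TB using IH nn by (intro add_left_mono sum_mono mult_left_mono) auto
    also have "P * ln R = (\<Sum>\<sigma>\<in>injs I J. W a I \<sigma> * ln (\<Sum>i'\<in>I. a i0 (\<sigma> i')))"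
    proof -
      have "\<And>\<sigma>. \<sigma> \<in> injs I J \<Longrightarrow> (\<Sum>i'\<in>I. a i0 (\<sigma> i')) = R"
        unfolding R_def using fI fJ cI cJ by (intro injs_sum_row) auto
      thus ?thesis unfolding P_def by (simp add: sum_distrib_right)
    qed
    finally show ?thesis by (simp add: distrib_left sum.distrib)
  qed
  have "real (card I) * (P * ln P) \<le> (\<Sum>i0\<in>I. \<Sum>\<sigma>\<in>injs I J. W a I \<sigma> * (ln (\<Sum>i'\<in>I. a i0 (\<sigma> i')) + T a \<sigma> (I - {i0})))"
    using step sum_mono[of I "\<lambda>_. P * ln P"] by simp
  also have "\<dots> = (\<Sum>\<sigma>\<in>injs I J. W a I \<sigma> * (\<Sum>i0\<in>I. ln (\<Sum>i'\<in>I. a i0 (\<sigma> i')) + T a \<sigma> (I - {i0})))"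
    by (simp add: sum_distrib_left sum.swap[of _ I])
  also have "\<dots> \<le> (\<Sum>\<sigma>\<in>injs I J. W a I \<sigma> * (real (card I) * T a \<sigma> I))"
  proof (rule sum_mono)
    fix \<sigma> assume "\<sigma> \<in> injs I J"
    show "W a I \<sigma> * (\<Sum>i0\<in>I. ln (\<Sum>i'\<in>I. a i0 (\<sigma> i')) + T a \<sigma> (I - {i0}))
        \<le> W a I \<sigma> * (real (card I) * T a \<sigma> I)"
    proof (cases "W a I \<sigma> = 0")
      case True thus ?thesis by simp
    next
      case False
      hence Wp: "0 < W a I \<sigma>" using W_nonneg[of a I \<sigma>] nn by simp
      show ?thesis
      proof (rule mult_left_mono)
        show "(\<Sum>i0\<in>I. ln (\<Sum>i'\<in>I. a i0 (\<sigma> i')) + T a \<sigma> (I - {i0})) \<le> real (card I) * T a \<sigma> I"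
          by (rule Tsuper[OF fI Ine]) (auto intro: W_pos[OF fI nn Wp] nn)
        show "0 \<le> W a I \<sigma>" using Wp by simp
      qed
    qed
  qed
  also have "\<dots> = real (card I) * (\<Sum>\<sigma>\<in>injs I J. W a I \<sigma> * T a \<sigma> I)"
    by (simp add: sum_distrib_left mult_ac)
  finally have "real (card I) * (P * ln P) \<le> real (card I) * (\<Sum>\<sigma>\<in>injs I J. W a I \<sigma> * T a \<sigma> I)" .
  moreover have "0 < real (card I)" using cI by simp
  ultimately show ?case unfolding P_def by simp
qed



lemma permutes_eq_injs: "{p. p permutes (UNIV :: 'n::finite set)} = injs UNIV UNIV"
proof -
  have "p permutes (UNIV :: 'n set) \<longleftrightarrow> inj p" for p :: "'n \<Rightarrow> 'n"
  proof
    assume "p permutes UNIV" thus "inj p" by (rule permutes_inj)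
  next
    assume "inj p"
    hence "bij p" using finite_UNIV_inj_surj[of p] by (simp add: bij_def)
    thus "p permutes UNIV" by (intro bij_imp_permutes) auto
  qed
  thus ?thesis unfolding injs_def by (auto simp: PiE_def extensional_def)
qed

lemma row_bound:
  fixes a :: "'n::finite \<Rightarrow> real"
  assumes nn: "\<And>j. 0 \<le> a j" and small: "\<And>j. a j \<le> 1/6" and sum1: "(\<Sum>j\<in>UNIV. a j) = 1"
    and j0: "0 < a j0" and n: "1 \<le> n"
  shows "Psi n (a j0) (1 - a j0) \<le> ln (\<Prod>j\<in>UNIV. self_pow (1 - a j)) + ln 2 / 2"
proof -
  define c where "c = a j0"
  have c0: "0 < c" and c6: "c \<le> 1/6" using j0 small[of j0] by (auto simp: c_def)
  have c1: "c < 1" using c6 by simp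
  have "Psi n c (1 - c) \<le> (G 1 - G c) / (1 - c)"
    using psi_bound[OF n c0 c1] n unfolding Psi_def by (simp add: divide_le_eq mult.commute)
  also have "\<dots> \<le> -1 + c^2/2 + ln 2 / 2" by (rule B_bound[OF c0 c6])
  also have "-1 + c^2/2 \<le> (\<Sum>j\<in>UNIV. (1 - a j) * ln (1 - a j))"
  proof -
    have "(\<Sum>j\<in>UNIV. - a j + (a j)^2/2) \<le> (\<Sum>j\<in>UNIV. (1 - a j) * ln (1 - a j))"
    proof (intro sum_mono g_bound nn)
      fix j show "a j < 1" using small[of j] by linarith
    qed
    moreover have "(\<Sum>j\<in>UNIV. - a j + (a j)^2/2) = -1 + (\<Sum>j\<in>UNIV. (a j)^2/2)"
      using sum1 by (simp add: sum_subtractf)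
    moreover have "c^2/2 \<le> (\<Sum>j\<in>UNIV. (a j)^2/2)"
      unfolding c_def by (rule member_le_sum) auto
    ultimately show ?thesis by linarith
  qed
  also have "(\<Sum>j\<in>UNIV. (1 - a j) * ln (1 - a j)) = ln (\<Prod>j\<in>UNIV. self_pow (1 - a j))"
  proof -
    have pos: "0 < 1 - a j" for j using small[of j] by linarith
    have nz: "self_pow (1 - a j) \<noteq> 0" for j using ln_self_pow(2)[OF pos[of j]] by simp
    have "ln (\<Prod>j\<in>UNIV. self_pow (1 - a j)) = (\<Sum>j\<in>UNIV. ln (self_pow (1 - a j)))"
      by (rule ln_prod) (simp_all add: nz)
    thus ?thesis using ln_self_pow(1)[OF pos] by simp
  qed
  finally show ?thesis by (simp add: c_def)
qed

theorem mainTheorem10: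
  fixes P :: "real ^ 'n ^ 'n" and r :: nat
  assumes "r \<ge> 6"
    and "doubly_stochastic P"
    and "\<And>i j. P $ i $ j \<le> 1 / real r"
  shows "per P \<le> sqrt 2 ^ CARD('n) * F P"
proof -
  define a where "a i j = P $ i $ j" for i j
  have nn: "\<And>i j. 0 \<le> a i j" and rows: "\<And>i. (\<Sum>j\<in>UNIV. a i j) = 1"
    using assms(2) by (auto simp: doubly_stochastic_def a_def)
  have r6: "1 / real r \<le> 1/6" using assms(1) by (simp add: field_simps)
  have small: "\<And>i j. a i j \<le> 1/6" using assms(3) r6 unfolding a_def by (meson order.trans)
  define n where "n = CARD('n)"
  have n1: "1 \<le> n" by (simp add: n_def Suc_le_eq)
  define per' where "per' = (\<Sum>\<sigma>\<in>injs (UNIV::'n set) UNIV. W a UNIV \<sigma>)"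
  have perEq: "per P = per'"
    unfolding per_def per'_def permutes_eq_injs W_def a_def by simp
  define K where "K = (\<Sum>i\<in>(UNIV::'n set). ln (\<Prod>j\<in>UNIV. self_pow (1 - a i j)) + ln 2 / 2)"
  have spos: "0 < self_pow (1 - a i j)" for i j using small[of i j] by (intro ln_self_pow(2)) linarith
  have keyI: "per' * ln per' \<le> (\<Sum>\<sigma>\<in>injs (UNIV::'n set) UNIV. W a UNIV \<sigma> * T a \<sigma> UNIV)"
    unfolding per'_def by (rule key[OF nn]) auto
  also have "\<dots> \<le> (\<Sum>\<sigma>\<in>injs (UNIV::'n set) UNIV. W a UNIV \<sigma> * K)"
  proof (rule sum_mono)
    fix \<sigma> :: "'n \<Rightarrow> 'n" assume s: "\<sigma> \<in> injs UNIV UNIV"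
    show "W a UNIV \<sigma> * T a \<sigma> UNIV \<le> W a UNIV \<sigma> * K"
    proof (cases "W a UNIV \<sigma> = 0")
      case True thus ?thesis by simp
    next
      case False
      hence Wp: "0 < W a UNIV \<sigma>" using W_nonneg[of a UNIV \<sigma>] nn by simp
      have "T a \<sigma> UNIV \<le> K"
        unfolding T_def K_def n_def[symmetric]
      proof (rule sum_mono)
        fix i :: 'n
        have "(\<Sum>i'\<in>UNIV. a i (\<sigma> i')) = 1"
          using injs_sum_row[of "UNIV::'n set" "UNIV::'n set" \<sigma> "a i"] s rows[of i] by simp
        hence "(\<Sum>i'\<in>UNIV - {i}. a i (\<sigma> i')) = 1 - a i (\<sigma> i)"
          by (simp add: sum_diff1)
        moreover have "Psi n (a i (\<sigma> i)) (1 - a i (\<sigma> i)) \<le> ln (\<Prod>j\<in>UNIV. self_pow (1 - a i j)) + ln 2 / 2"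
          by (rule row_bound[OF nn small rows W_pos[OF _ nn Wp] n1]) auto
        ultimately show "Psi n (a i (\<sigma> i)) (\<Sum>i'\<in>UNIV - {i}. a i (\<sigma> i')) \<le> ln (\<Prod>j\<in>UNIV. self_pow (1 - a i j)) + ln 2 / 2"
          by simp
      qed
      thus ?thesis using Wp by (intro mult_left_mono) auto
    qed
  qed
  also have "\<dots> = per' * K" unfolding per'_def by (simp add: sum_distrib_right)
  finally have main: "per' * ln per' \<le> per' * K" .
  have Fnn: "0 \<le> F P" unfolding F_def using spos unfolding a_def by (intro prod_nonneg) (auto intro: less_imp_le)
  have expK: "exp K = sqrt 2 ^ n * F P"
  proof -
    have s2: "exp (ln 2 / 2) = sqrt 2"
      using powr_half_sqrt[of 2] by (simp add: powr_def)
    have "exp K = (\<Prod>i\<in>(UNIV::'n set). exp (ln (\<Prod>j\<in>UNIV. self_pow (1 - a i j)) + ln 2 / 2))"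
      unfolding K_def by (simp add: exp_sum)
    also have "\<dots> = (\<Prod>i\<in>(UNIV::'n set). sqrt 2 * (\<Prod>j\<in>UNIV. self_pow (1 - a i j)))"
      by (intro prod.cong refl) (simp add: exp_add s2 prod_pos spos)
    also have "\<dots> = sqrt 2 ^ n * F P"
      by (simp add: prod.distrib n_def F_def a_def)
    finally show ?thesis .
  qed
  show ?thesis
  proof (cases "per' = 0")
    case True thus ?thesis using perEq Fnn by simp
  next
    case False
    have "0 \<le> per'" unfolding per'_def using nn by (intro sum_nonneg W_nonneg) auto
    hence pp: "0 < per'" using False by simp
    hence "ln per' \<le> K" using main by simp
    hence "per' \<le> exp K" using pp by (metis exp_le_cancel_iff exp_ln)
    thus ?thesis using perEq expK n_def by simp
  qed
qed

end
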